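(* For every integer $n\ge1$ there are real constants $c_{kj}$, $1\le k\le n$, $1\le j\le n+1$, such that for every $w,w_0\in\mathbb{C}$ the following identity holds: $$\langle w^n(w-w_0)\rangle=\langle w_0w^n\rangle+\langle w_0^n(w-w_0)\rangle+\sum_{k=1}^n\sum_{j=1}^{n+1}c_{kj}\langle w_0\rangle^{n+1-j}\int_0^1\langle w-w_0t\rangle^j(1-t)^{k-1}\,dt.$$
   Context: For $w\in\mathbb{C}\setminus\{0\}$, $\langle w\rangle:=\overline w/w$ denotes the phase function; the identity is understood for $w,w_0$ such that the phase functions involved are defined (in particular $w_0\ne0$, $w\ne0$, $w\ne w_0$). *)

theory Defs
  imports "HOL-Analysis.Analysis"
begin

definition phase :: "complex \<Rightarrow> complex" where
  "phase w = cnj w / w"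

end

theory Submission
  imports Defs
begin

lemma du: fixes a z :: complex assumes az: "a - z \<noteq> 0"
  shows "((\<lambda>z. (1-z)/(a-z)) has_field_derivative (1-a)/(a-z)^2) (at z)"
proof -
  have "((\<lambda>z. (1-z)/(a-z)) has_field_derivative ((0-1) * (a-z) - (1-z)*(0-1))/((a-z)*(a-z))) (at z)"
    by (intro derivative_intros DERIV_divide) (use az in auto)
  moreover have "((0-1) * (a-z) - (1-z)*(0-1))/((a-z)*(a-z)) = (1-a)/(a-z)^2"
    by (simp add: power2_eq_square algebra_simps del: div_mult_self1 div_mult_self2)
  ultimately show ?thesis by (simp only:)
qed
lemma alg: fixes a z :: complex assumes az: "a - z \<noteq> 0" and k: "k \<ge> 1" and a1: "1 - a \<noteq> 0"
  shows "of_nat k * ((1-a)/(a-z)^2 * ((1 - z) / (a - z)) ^ (k - 1)) / (of_nat k * (1 - a))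
        = (1 - z) ^ (k - 1) / (a - z) ^ (k + 1)"
proof -
  have e: "(a - z) ^ (k + 1) = (a - z) ^ (k - 1) * (a-z)^2" using k by (simp flip: power_add)
  show ?thesis using k az a1 unfolding e by (simp add: power_divide)
qed
lemma L2:
  fixes a :: complex and k :: nat
  assumes na: "a \<notin> \<real>" and k: "k \<ge> 1"
  shows "((\<lambda>t::real. complex_of_real ((1 - t) ^ (k - 1)) / (a - complex_of_real t) ^ (k + 1))
          has_integral 1 / (of_nat k * a ^ k * (a - 1))) {0..1}"
proof -
  have nz: "a - z \<noteq> 0" if "z \<in> \<real>" for z using na that by auto
  have a0: "a \<noteq> 0" "a \<noteq> 1" "1 - a \<noteq> 0" using nz[of 0] nz[of 1] by auto
  define F where "F z = ((1 - z) / (a - z)) ^ k / (of_nat k * (1 - a))" for z :: complex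
  have D: "(F has_field_derivative (1 - z) ^ (k - 1) / (a - z) ^ (k + 1)) (at z)" if z: "z \<in> \<real>" for z
  proof -
    have az: "a - z \<noteq> 0" using nz[OF z] .
    have "(F has_field_derivative of_nat k * ((1-a)/(a-z)^2 * ((1 - z) / (a - z)) ^ (k - Suc 0)) / (of_nat k * (1 - a))) (at z)"
      unfolding F_def by (intro DERIV_cdivide DERIV_power du az)
    then show ?thesis using alg[OF az k a0(3)] by simp
  qed
  have "((\<lambda>t::real. F (of_real t)) has_vector_derivative
          complex_of_real ((1 - t) ^ (k - 1)) / (a - complex_of_real t) ^ (k + 1)) (at t within {0..1})" for t
    using has_vector_derivative_real_field[OF D[of "of_real t"]] by simp
  from fundamental_theorem_of_calculus[OF _ this]
  have "((\<lambda>t::real. complex_of_real ((1 - t) ^ (k - 1)) / (a - complex_of_real t) ^ (k + 1))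
          has_integral F 1 - F 0) {0..1}" by simp
  moreover have "F 1 - F 0 = 1 / (of_nat k * a ^ k * (a - 1))"
  proof -
    have "F 1 = 0" using k by (simp add: F_def zero_power)
    moreover have "F 0 = 1 / (a ^ k * (of_nat k * (1 - a)))" by (simp add: F_def power_divide)
    ultimately show ?thesis using k a0 by (simp add: field_simps)
  qed
  ultimately show ?thesis by simp
qed

lemma L1:
  fixes k :: nat assumes k: "k \<ge> 1"
  shows "((\<lambda>t::real. complex_of_real ((1 - t) ^ (k - 1))) has_integral 1 / of_nat k) {0..1}"
proof -
  define F where "F z = (-1) * (1 - z) ^ k / of_nat k" for z :: complex
  have D: "(F has_field_derivative (1 - z) ^ (k - 1)) (at z)" for z
    using k unfolding F_def by (auto intro!: derivative_eq_intros simp: field_simps)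
  have "((\<lambda>t::real. F (of_real t)) has_vector_derivative
          complex_of_real ((1 - t) ^ (k - 1))) (at t within {0..1})" for t
    using has_vector_derivative_real_field[OF D[of "of_real t"]] by simp
  from fundamental_theorem_of_calculus[OF _ this]
  show ?thesis using k by (simp add: F_def zero_power)
qed

lemma binsum:
  fixes H :: complex
  assumes "k \<le> n"
  shows "(\<Sum>j = 1..n + 1. of_nat (Suc k choose j) * (-1) ^ (Suc k - j) * H ^ j)
         = (H - 1) ^ Suc k - (-1) ^ Suc k"
proof -
  have "(H - 1) ^ Suc k = (H + (-1)) ^ Suc k" by simp
  also have "\<dots> = (\<Sum>j\<le>Suc k. of_nat (Suc k choose j) * H ^ j * (-1) ^ (Suc k - j))"
    by (rule binomial_ring)
  also have "\<dots> = (\<Sum>j\<in>{0..Suc k}. of_nat (Suc k choose j) * (-1) ^ (Suc k - j) * H ^ j)"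
    by (simp add: atLeast0AtMost mult_ac)
  also have "\<dots> = (-1) ^ Suc k + (\<Sum>j\<in>{1..Suc k}. of_nat (Suc k choose j) * (-1) ^ (Suc k - j) * H ^ j)"
    by (subst sum.atLeast_Suc_atMost) auto
  also have "(\<Sum>j\<in>{1..Suc k}. of_nat (Suc k choose j) * (-1) ^ (Suc k - j) * H ^ j)
     = (\<Sum>j = 1..n + 1. of_nat (Suc k choose j) * (-1) ^ (Suc k - j) * H ^ j)"
    by (rule sum.mono_neutral_left) (use assms in auto)
  finally show ?thesis by simp
qed

lemma S1:
  fixes x :: complex
  shows "(\<Sum>k = 1..n. of_nat (n choose k) * x ^ k) = (1 + x) ^ n - 1"
proof -
  have "(x + 1) ^ n = (\<Sum>k\<le>n. of_nat (n choose k) * x ^ k * 1 ^ (n - k))"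
    by (rule binomial_ring)
  also have "\<dots> = (\<Sum>k\<in>{0..n}. of_nat (n choose k) * x ^ k)" by (simp add: atLeast0AtMost)
  also have "\<dots> = 1 + (\<Sum>k = 1..n. of_nat (n choose k) * x ^ k)"
    by (subst sum.atLeast_Suc_atMost) auto
  finally show ?thesis by (simp add: add.commute)
qed

lemma S2:
  assumes "n \<ge> 1"
  shows "(\<Sum>k = 1..n. of_nat (n choose k) * (-1) ^ Suc k) = (1::complex)"
proof -
  have "(\<Sum>k = 1..n. of_nat (n choose k) * (-1::complex) ^ k) = (1 + (-1)) ^ n - 1" by (rule S1)
  also have "\<dots> = -1" using assms by simp
  finally have "(\<Sum>k = 1..n. of_nat (n choose k) * (-1::complex) ^ k) = -1" .
  then have "- (\<Sum>k = 1..n. of_nat (n choose k) * (-1::complex) ^ k) = 1" by simp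
  then show ?thesis by (simp add: sum_negf[symmetric])
qed

lemma phase_mult: "phase (x * y) = phase x * phase y"
  by (simp add: phase_def)

lemma phase_power: "phase (x ^ m) = phase x ^ m"
  by (simp add: phase_def power_divide)


lemma fin:
  fixes p x y :: complex
  shows "(p * (1 + x)) ^ n * (p * (1 + y)) = p * (p * (1 + x)) ^ n + p ^ n * (p * (1 + y))
         + p ^ (n + 1) * (((1 + x) ^ n - 1) * y - 1)"
  unfolding power_mult_distrib by (simp add: algebra_simps del: power_mult_distrib)

theorem lemma3p8:
  fixes n :: nat
  assumes "n \<ge> 1"
  shows "\<exists>c :: nat \<Rightarrow> nat \<Rightarrow> real. \<forall>w w0 :: complex.
           w0 \<noteq> 0 \<longrightarrow> w \<noteq> 0 \<longrightarrow> w \<noteq> w0 \<longrightarrow>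
           phase (w ^ n * (w - w0)) =
             phase (w0 * w ^ n) + phase (w0 ^ n * (w - w0)) +
             (\<Sum>k = 1..n. \<Sum>j = 1..n + 1.
                complex_of_real (c k j) * phase w0 ^ (n + 1 - j) *
                integral {0..1} (\<lambda>t::real. phase (w - w0 * complex_of_real t) ^ j *
                                            complex_of_real ((1 - t) ^ (k - 1))))"
proof -
  define c where "c k j = real (n choose k) * real k * real (Suc k choose j) * (-1) ^ (Suc k - j)"
    for k j
  have main: "phase (w ^ n * (w - w0)) =
             phase (w0 * w ^ n) + phase (w0 ^ n * (w - w0)) +
             (\<Sum>k = 1..n. \<Sum>j = 1..n + 1.
                complex_of_real (c k j) * phase w0 ^ (n + 1 - j) *
                integral {0..1} (\<lambda>t::real. phase (w - w0 * complex_of_real t) ^ j *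
                                            complex_of_real ((1 - t) ^ (k - 1))))"
    if w0: "w0 \<noteq> 0" and w: "w \<noteq> 0" and ww: "w \<noteq> w0" for w w0 :: complex
  proof -
    define p where "p = phase w0"
    define a where "a = w / w0"
    define d where "d = cnj a - a"
    define G where "G t = p * (1 + d / (a - complex_of_real t))" for t :: real
    have wa: "w = w0 * a" using w0 by (simp add: a_def)
    have a0: "a \<noteq> 0" "a \<noteq> 1" using w ww w0 by (auto simp: a_def)
    have A: "phase (w - w0 * complex_of_real t) = G t" if "complex_of_real t \<noteq> a" for t
    proof -
      have nz: "a - complex_of_real t \<noteq> 0" using that by simp
      have "w - w0 * complex_of_real t = w0 * (a - complex_of_real t)" by (simp add: wa algebra_simps)
      then have "phase (w - w0 * complex_of_real t) = p * (cnj a - complex_of_real t) / (a - complex_of_real t)"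
        by (simp add: phase_def p_def)
      also have "\<dots> = G t" using nz by (simp add: G_def d_def field_simps)
      finally show ?thesis .
    qed
    have negl: "negligible {t::real. complex_of_real t = a}"
      by (rule negligible_subset[of "{Re a}"]) auto
    have Gc: "continuous_on {0..1} G"
    proof (cases "d = 0")
      case True then show ?thesis by (simp add: G_def)
    next
      case False
      then have na: "a \<notin> \<real>" by (auto simp: d_def Reals_cnj_iff)
      have "a - complex_of_real t \<noteq> 0" for t using na by auto
      then show ?thesis unfolding G_def by (intro continuous_intros) auto
    qed
    have int_eq: "integral {0..1} (\<lambda>t. phase (w - w0 * complex_of_real t) ^ j * complex_of_real ((1 - t) ^ (k - 1)))
        = integral {0..1} (\<lambda>t. G t ^ j * complex_of_real ((1 - t) ^ (k - 1)))" for j k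
      by (rule integral_spike[OF negl]) (use A in auto)
    have intb: "(\<lambda>t. G t ^ j * complex_of_real ((1 - t) ^ (k - 1))) integrable_on {0..1}" for j k
      by (rule integrable_continuous_real) (intro continuous_intros Gc)
    define V where "V k = p ^ (n + 1) * of_nat (n choose k) * ((d / a) ^ k * (d / (a - 1)) - (-1) ^ Suc k)" for k
    have hk: "(\<Sum>j = 1..n + 1. complex_of_real (c k j) * p ^ (n + 1 - j) *
                integral {0..1} (\<lambda>t. G t ^ j * complex_of_real ((1 - t) ^ (k - 1)))) = V k"
      if k: "k \<in> {1..n}" for k
    proof -
      have h1: "((\<lambda>t. \<Sum>j = 1..n + 1. complex_of_real (c k j) * p ^ (n + 1 - j) *
                   (G t ^ j * complex_of_real ((1 - t) ^ (k - 1)))) has_integral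
               (\<Sum>j = 1..n + 1. complex_of_real (c k j) * p ^ (n + 1 - j) *
                integral {0..1} (\<lambda>t. G t ^ j * complex_of_real ((1 - t) ^ (k - 1))))) {0..1}"
        by (intro has_integral_sum finite_atLeastAtMost has_integral_mult_right integrable_integral intb)
      have fe: "(\<Sum>j = 1..n + 1. complex_of_real (c k j) * p ^ (n + 1 - j) *
                   (G t ^ j * complex_of_real ((1 - t) ^ (k - 1))))
          = p ^ (n + 1) * of_nat (n choose k) * of_nat k *
             (d ^ (k + 1) * (complex_of_real ((1 - t) ^ (k - 1)) / (a - complex_of_real t) ^ (k + 1))
              - (-1) ^ Suc k * complex_of_real ((1 - t) ^ (k - 1)))" for t
      proof -
        define H where "H = 1 + d / (a - complex_of_real t)"
        define r where "r = complex_of_real ((1 - t) ^ (k - 1))"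
        have "(\<Sum>j = 1..n + 1. complex_of_real (c k j) * p ^ (n + 1 - j) * (G t ^ j * r))
           = (\<Sum>j = 1..n + 1. (p ^ (n + 1) * of_nat (n choose k) * of_nat k * r) *
                  (of_nat (Suc k choose j) * (-1) ^ (Suc k - j) * H ^ j))"
        proof (rule sum.cong[OF refl])
          fix j assume j: "j \<in> {1..n + 1}"
          have pp: "p ^ (n + 1 - j) * p ^ j = p ^ (n + 1)" using j by (simp flip: power_add)
          have "complex_of_real (c k j) * p ^ (n + 1 - j) * (G t ^ j * r)
               = of_nat (n choose k) * of_nat k * of_nat (Suc k choose j) * (-1) ^ (Suc k - j)
                 * (p ^ (n + 1 - j) * p ^ j) * H ^ j * r"
            by (simp add: c_def G_def H_def power_mult_distrib)
          also have "\<dots> = (p ^ (n + 1) * of_nat (n choose k) * of_nat k * r) *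
                  (of_nat (Suc k choose j) * (-1) ^ (Suc k - j) * H ^ j)"
            unfolding pp by (simp add: mult_ac)
          finally show "complex_of_real (c k j) * p ^ (n + 1 - j) * (G t ^ j * r) = \<dots>" .
        qed
        also have "\<dots> = (p ^ (n + 1) * of_nat (n choose k) * of_nat k * r) *
                  ((H - 1) ^ Suc k - (-1) ^ Suc k)"
          using binsum[of k n H] k by (simp add: sum_distrib_left[symmetric])
        also have "(H - 1) ^ Suc k = d ^ (k + 1) / (a - complex_of_real t) ^ (k + 1)"
          by (simp add: H_def power_divide)
        finally show ?thesis unfolding r_def by (simp add: algebra_simps)
      qed
      have I1: "((\<lambda>t. d ^ (k + 1) * (complex_of_real ((1 - t) ^ (k - 1)) / (a - complex_of_real t) ^ (k + 1)))
          has_integral d ^ (k + 1) * (1 / (of_nat k * a ^ k * (a - 1)))) {0..1}"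
      proof (cases "d = 0")
        case True then show ?thesis by simp
      next
        case False
        then have na: "a \<notin> \<real>" by (auto simp: d_def Reals_cnj_iff)
        show ?thesis by (rule has_integral_mult_right[OF L2[OF na]]) (use k in auto)
      qed
      note I2 = has_integral_mult_right[OF has_integral_diff[OF I1 has_integral_mult_right[OF L1, of k "(-1) ^ Suc k"]],
          of "p ^ (n + 1) * of_nat (n choose k) * of_nat k"]
      have h2: "((\<lambda>t. \<Sum>j = 1..n + 1. complex_of_real (c k j) * p ^ (n + 1 - j) *
                   (G t ^ j * complex_of_real ((1 - t) ^ (k - 1)))) has_integral
           p ^ (n + 1) * of_nat (n choose k) * of_nat k *
             (d ^ (k + 1) * (1 / (of_nat k * a ^ k * (a - 1))) - (-1) ^ Suc k * (1 / of_nat k))) {0..1}"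
        unfolding fe using I2 k by simp
      have "(\<Sum>j = 1..n + 1. complex_of_real (c k j) * p ^ (n + 1 - j) *
                integral {0..1} (\<lambda>t. G t ^ j * complex_of_real ((1 - t) ^ (k - 1))))
          = p ^ (n + 1) * of_nat (n choose k) * of_nat k *
             (d ^ (k + 1) * (1 / (of_nat k * a ^ k * (a - 1))) - (-1) ^ Suc k * (1 / of_nat k))"
        using has_integral_unique[OF h1 h2] .
      also have "\<dots> = V k"
        using k a0 by (simp add: V_def power_divide field_simps)
      finally show ?thesis .
    qed
    have sumV: "(\<Sum>k = 1..n. V k) = p ^ (n + 1) * (((1 + d / a) ^ n - 1) * (d / (a - 1)) - 1)"
    proof -
      have "(\<Sum>k = 1..n. V k) = (\<Sum>k = 1..n. p ^ (n + 1) * ((of_nat (n choose k) * (d / a) ^ k) * (d / (a - 1)))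
           - p ^ (n + 1) * (of_nat (n choose k) * (-1) ^ Suc k))"
        unfolding V_def by (rule sum.cong[OF refl]) (simp only: right_diff_distrib mult_ac)
      also have "\<dots> = p ^ (n + 1) * ((\<Sum>k = 1..n. of_nat (n choose k) * (d / a) ^ k) * (d / (a - 1)))
           - p ^ (n + 1) * (\<Sum>k = 1..n. of_nat (n choose k) * (-1) ^ Suc k)"
        by (simp only: sum_subtractf sum_distrib_left sum_distrib_right)
      also have "\<dots> = p ^ (n + 1) * (((1 + d / a) ^ n - 1) * (d / (a - 1)) - 1)"
        by (simp only: S1 S2[OF assms] right_diff_distrib mult_1_right)
      finally show ?thesis .
    qed
    have pw: "phase w = p * (1 + d / a)"
      using a0 by (simp add: wa phase_def p_def d_def field_simps)
    have pw1: "phase (w - w0) = p * (1 + d / (a - 1))"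
    proof -
      have "w - w0 = w0 * (a - 1)" by (simp add: wa algebra_simps)
      then show ?thesis using a0 by (simp add: phase_def p_def d_def field_simps)
    qed
    have "(\<Sum>k = 1..n. \<Sum>j = 1..n + 1.
                complex_of_real (c k j) * phase w0 ^ (n + 1 - j) *
                integral {0..1} (\<lambda>t::real. phase (w - w0 * complex_of_real t) ^ j *
                                            complex_of_real ((1 - t) ^ (k - 1))))
        = (\<Sum>k = 1..n. V k)"
      unfolding int_eq p_def[symmetric] by (rule sum.cong[OF refl] hk)+
    also note sumV
    finally have sumeq: "(\<Sum>k = 1..n. \<Sum>j = 1..n + 1.
                complex_of_real (c k j) * phase w0 ^ (n + 1 - j) *
                integral {0..1} (\<lambda>t::real. phase (w - w0 * complex_of_real t) ^ j *
                                            complex_of_real ((1 - t) ^ (k - 1))))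
        = p ^ (n + 1) * (((1 + d / a) ^ n - 1) * (d / (a - 1)) - 1)" .
    show ?thesis
      unfolding sumeq
      unfolding phase_mult phase_power pw pw1 p_def[symmetric]
      by (rule fin)
  qed
  show ?thesis by (rule exI[of _ c]) (use main in blast)
qed

end
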